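(* Let $d\in\mathbb{N}$. For every $N\in\mathbb{N}$ there is a polynomial $p_N$ of degree $N$ on $\mathbb{R}$ such that the following holds. For all $\varepsilon\in(0,1]$ and $y\in\mathbb{R}^d$ there is a linear operator $\Psi_{\varepsilon,y}:\mathbb{R}^{\binom{N+d}{N}}\to C_c^\infty(B_\varepsilon(y))$, $m\mapsto\Psi_{\varepsilon,y,m}$, such that $\int x^\alpha\Psi_{\varepsilon,y,m}(x)\,dx=m_\alpha$ for all multi-indices $|\alpha|\le N$, and $\|\Psi_{\varepsilon,y,m}\|_{L^\infty}\le\dfrac{p_N(|y|)}{\varepsilon^{d+N}}|m|$.
   Context: Vectors $m\in\mathbb{R}^{\binom{N+d}{N}}$ are indexed by the multi-indices $\alpha\in\mathbb{N}^d$ with $|\alpha|\le N$ (there are exactly $\binom{N+d}{N}$ of them), $m=(m_\alpha)_{|\alpha|\le N}$; $|m|$ is its Euclidean norm; $x^\alpha=\prod_ix_i^{\alpha_i}$; $C_c^\infty(B_\varepsilon(y))$ is the space of smooth functions compactly supported in the open ball $B_\varepsilon(y)$. *)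

theory Defs
  imports "HOL-Analysis.Analysis" "HOL-Computational_Algebra.Polynomial"
begin

text \<open>Multi-indices on R^d (d = CARD('n)) are functions 'n => nat.\<close>

definition mi_abs :: "('n::finite \<Rightarrow> nat) \<Rightarrow> nat" where
  "mi_abs \<alpha> = (\<Sum>i\<in>UNIV. \<alpha> i)"

definition mono_pow :: "real^'n::finite \<Rightarrow> ('n \<Rightarrow> nat) \<Rightarrow> real" where
  "mono_pow x \<alpha> = (\<Prod>i\<in>UNIV. (x $ i) ^ (\<alpha> i))"

definition mvec_norm :: "nat \<Rightarrow> (('n::finite \<Rightarrow> nat) \<Rightarrow> real) \<Rightarrow> real" where
  "mvec_norm N m = sqrt (\<Sum>\<alpha>\<in>{\<alpha>. mi_abs \<alpha> \<le> N}. (m \<alpha>)^2)"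

text \<open>C^infinity: all iterated partial derivatives exist and are continuous.\<close>
definition smooth_fun :: "(real^'n::finite \<Rightarrow> real) \<Rightarrow> bool" where
  "smooth_fun f \<longleftrightarrow> (\<exists>F. f \<in> F \<and> (\<forall>g\<in>F. continuous_on UNIV g \<and>
      (\<forall>i. \<exists>h\<in>F. \<forall>x. ((\<lambda>t. g (x + t *\<^sub>R axis i 1)) has_real_derivative h x) (at 0))))"

definition Cc_inf :: "(real^'n::finite) set \<Rightarrow> (real^'n \<Rightarrow> real) set" where
  "Cc_inf U = {f. smooth_fun f \<and> (\<exists>K. compact K \<and> K \<subseteq> U \<and> (\<forall>x. x \<notin> K \<longrightarrow> f x = 0))}"

end

theory Submission
  imports Defs
begin

definition sm :: "('i \<Rightarrow> ('a \<Rightarrow> real) \<Rightarrow> ('a \<Rightarrow> real) \<Rightarrow> bool) \<Rightarrow> ('a::topological_space \<Rightarrow> real) \<Rightarrow> bool" where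
  "sm D f \<longleftrightarrow> (\<exists>F. f \<in> F \<and> (\<forall>g\<in>F. continuous_on UNIV g \<and> (\<forall>i. \<exists>h\<in>F. D i g h)))"

lemma sm_add:
  assumes add: "\<And>i g h g' h'. D i g h \<Longrightarrow> D i g' h' \<Longrightarrow> D i (\<lambda>x. g x + g' x) (\<lambda>x. h x + h' x)"
  and "sm D f" "sm D f'"
  shows "sm D (\<lambda>x. f x + f' x)"
proof -
  obtain F where F: "f \<in> F" "\<forall>g\<in>F. continuous_on UNIV g \<and> (\<forall>i. \<exists>h\<in>F. D i g h)"
    using assms(2) unfolding sm_def by blast
  obtain G where G: "f' \<in> G" "\<forall>g\<in>G. continuous_on UNIV g \<and> (\<forall>i. \<exists>h\<in>G. D i g h)"
    using assms(3) unfolding sm_def by blast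
  let ?H = "{(\<lambda>x. a x + b x) | a b. a \<in> F \<and> b \<in> G}"
  show ?thesis unfolding sm_def
  proof (intro exI[of _ ?H] conjI ballI allI)
    show "(\<lambda>x. f x + f' x) \<in> ?H" using F G by blast
  next
    fix g assume "g \<in> ?H"
    then obtain a b where ab: "g = (\<lambda>x. a x + b x)" "a \<in> F" "b \<in> G" by blast
    show "continuous_on UNIV g" using ab F G by (simp add: continuous_on_add)
  next
    fix g i assume "g \<in> ?H"
    then obtain a b where ab: "g = (\<lambda>x. a x + b x)" "a \<in> F" "b \<in> G" by blast
    obtain ha where "ha \<in> F" "D i a ha" using ab F by blast
    moreover obtain hb where "hb \<in> G" "D i b hb" using ab G by blast
    ultimately show "\<exists>h\<in>?H. D i g h" using ab add by blast
  qed
qed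

lemma sm_cmult:
  assumes cm: "\<And>i g h c. D i g h \<Longrightarrow> D i (\<lambda>x. c * g x) (\<lambda>x. c * h x)"
  and "sm D f"
  shows "sm D (\<lambda>x. c * f x)"
proof -
  obtain F where F: "f \<in> F" "\<forall>g\<in>F. continuous_on UNIV g \<and> (\<forall>i. \<exists>h\<in>F. D i g h)"
    using assms(2) unfolding sm_def by blast
  let ?H = "(\<lambda>a. (\<lambda>x. c * a x)) ` F"
  show ?thesis unfolding sm_def
  proof (intro exI[of _ ?H] conjI ballI allI)
    show "(\<lambda>x. c * f x) \<in> ?H" using F by blast
  next
    fix g assume "g \<in> ?H"
    then obtain a where ab: "g = (\<lambda>x. c * a x)" "a \<in> F" by blast
    show "continuous_on UNIV g" using ab F by (simp add: continuous_on_mult continuous_on_const)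
  next
    fix g i assume "g \<in> ?H"
    then obtain a where ab: "g = (\<lambda>x. c * a x)" "a \<in> F" by blast
    obtain ha where "ha \<in> F" "D i a ha" using ab F by blast
    then show "\<exists>h\<in>?H. D i g h" using ab cm by blast
  qed
qed

lemma sm_const:
  assumes cst: "\<And>i c. D i (\<lambda>x. c) (\<lambda>x. 0)"
  shows "sm D (\<lambda>x. c)"
  unfolding sm_def
  by (rule exI[of _ "{(\<lambda>x. c), (\<lambda>x. 0)}"]) (auto intro: cst)

inductive_set prodset :: "('a \<Rightarrow> real) set \<Rightarrow> ('a \<Rightarrow> real) set \<Rightarrow> ('a \<Rightarrow> real) set" for F G where
  base: "a \<in> F \<Longrightarrow> b \<in> G \<Longrightarrow> (\<lambda>x. a x * b x) \<in> prodset F G"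
| plus: "u \<in> prodset F G \<Longrightarrow> v \<in> prodset F G \<Longrightarrow> (\<lambda>x. u x + v x) \<in> prodset F G"

lemma sm_mult:
  assumes add: "\<And>i g h g' h'. D i g h \<Longrightarrow> D i g' h' \<Longrightarrow> D i (\<lambda>x. g x + g' x) (\<lambda>x. h x + h' x)"
  and mul: "\<And>i g h g' h'. D i g h \<Longrightarrow> D i g' h' \<Longrightarrow> D i (\<lambda>x. g x * g' x) (\<lambda>x. h x * g' x + g x * h' x)"
  and "sm D f" "sm D f'"
  shows "sm D (\<lambda>x. f x * f' x)"
proof -
  obtain F where F: "f \<in> F" "\<forall>g\<in>F. continuous_on UNIV g \<and> (\<forall>i. \<exists>h\<in>F. D i g h)"
    using assms(3) unfolding sm_def by blast
  obtain G where G: "f' \<in> G" "\<forall>g\<in>G. continuous_on UNIV g \<and> (\<forall>i. \<exists>h\<in>G. D i g h)"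
    using assms(4) unfolding sm_def by blast
  have P: "continuous_on UNIV g \<and> (\<forall>i. \<exists>h\<in>prodset F G. D i g h)" if "g \<in> prodset F G" for g
    using that
  proof induct
    case (base a b)
    have c: "continuous_on UNIV (\<lambda>x. a x * b x)" using base F G by (simp add: continuous_on_mult)
    show ?case
    proof (intro conjI c allI)
      fix i
      obtain ha where ha: "ha \<in> F" "D i a ha" using base F by blast
      obtain hb where hb: "hb \<in> G" "D i b hb" using base G by blast
      have "(\<lambda>x. ha x * b x + a x * hb x) \<in> prodset F G"
        by (intro prodset.plus prodset.base ha hb base)
      then show "\<exists>h\<in>prodset F G. D i (\<lambda>x. a x * b x) h" using mul[OF ha(2) hb(2)] by blast
    qed
  next
    case (plus u v)
    show ?case
    proof (intro conjI allI)
      show "continuous_on UNIV (\<lambda>x. u x + v x)" using plus by (simp add: continuous_on_add)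
      fix i
      obtain hu where hu: "hu \<in> prodset F G" "D i u hu" using plus by blast
      obtain hv where hv: "hv \<in> prodset F G" "D i v hv" using plus by blast
      show "\<exists>h\<in>prodset F G. D i (\<lambda>x. u x + v x) h"
        using add[OF hu(2) hv(2)] prodset.plus[OF hu(1) hv(1)] by blast
    qed
  qed
  show ?thesis unfolding sm_def
    using P prodset.base[OF F(1) G(1)] by blast
qed

definition D1 :: "unit \<Rightarrow> (real \<Rightarrow> real) \<Rightarrow> (real \<Rightarrow> real) \<Rightarrow> bool" where
  "D1 i g h \<longleftrightarrow> (\<forall>x. (g has_real_derivative h x) (at x))"

definition Dn :: "'n \<Rightarrow> (real^'n::finite \<Rightarrow> real) \<Rightarrow> (real^'n \<Rightarrow> real) \<Rightarrow> bool" where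
  "Dn i g h \<longleftrightarrow> (\<forall>x. ((\<lambda>t. g (x + t *\<^sub>R axis i 1)) has_real_derivative h x) (at 0))"

lemma smooth_fun_sm: "smooth_fun f \<longleftrightarrow> sm Dn f"
  unfolding smooth_fun_def sm_def Dn_def by blast

abbreviation "smooth1 \<equiv> sm D1"

lemma D1_add: "D1 i g h \<Longrightarrow> D1 i g' h' \<Longrightarrow> D1 i (\<lambda>x. g x + g' x) (\<lambda>x. h x + h' x)"
  unfolding D1_def by (auto intro!: DERIV_add)
lemma D1_cmult: "D1 i g h \<Longrightarrow> D1 i (\<lambda>x. c * g x) (\<lambda>x. c * h x)"
  unfolding D1_def by (auto intro!: DERIV_cmult)
lemma D1_mult: "D1 i g h \<Longrightarrow> D1 i g' h' \<Longrightarrow> D1 i (\<lambda>x. g x * g' x) (\<lambda>x. h x * g' x + g x * h' x)"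
  unfolding D1_def
proof
  fix x assume that: "\<forall>x. (g has_real_derivative h x) (at x)" "\<forall>x. (g' has_real_derivative h' x) (at x)"
  show "((\<lambda>x. g x * g' x) has_real_derivative h x * g' x + g x * h' x) (at x)"
  proof -
    have "(g has_real_derivative h x) (at x)" "(g' has_real_derivative h' x) (at x)" using that by auto
    then have "((\<lambda>x. g x * g' x) has_real_derivative h x * g' x + h' x * g x) (at x)" by (rule DERIV_mult)
    then show ?thesis by (simp add: mult.commute)
  qed
qed
lemma D1_const: "D1 i (\<lambda>x. c) (\<lambda>x. 0)"
  unfolding D1_def by simp

lemma Dn_add: "Dn i g h \<Longrightarrow> Dn i g' h' \<Longrightarrow> Dn i (\<lambda>x. g x + g' x) (\<lambda>x. h x + h' x)"
  unfolding Dn_def by (auto intro!: DERIV_add)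
lemma Dn_cmult: "Dn i g h \<Longrightarrow> Dn i (\<lambda>x. c * g x) (\<lambda>x. c * h x)"
  unfolding Dn_def by (auto intro!: DERIV_cmult)
lemma Dn_mult: "Dn i g h \<Longrightarrow> Dn i g' h' \<Longrightarrow> Dn i (\<lambda>x. g x * g' x) (\<lambda>x. h x * g' x + g x * h' x)"
  unfolding Dn_def
proof
  fix x assume a: "\<forall>x. ((\<lambda>t. g (x + t *\<^sub>R axis i 1)) has_real_derivative h x) (at 0)"
     "\<forall>x. ((\<lambda>t. g' (x + t *\<^sub>R axis i 1)) has_real_derivative h' x) (at 0)"
  show "((\<lambda>t. g (x + t *\<^sub>R axis i 1) * g' (x + t *\<^sub>R axis i 1)) has_real_derivative h x * g' x + g x * h' x) (at 0)"
    using DERIV_mult[OF a(1)[rule_format, of x] a(2)[rule_format, of x]] by (simp add: mult.commute)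
qed
lemma Dn_const: "Dn i (\<lambda>x. c) (\<lambda>x. 0)"
  unfolding Dn_def by simp

lemma s1_add: "smooth1 f \<Longrightarrow> smooth1 f' \<Longrightarrow> smooth1 (\<lambda>x. f x + f' x)"
  by (rule sm_add[where D=D1]) (auto intro: D1_add)
lemma s1_cmult: "smooth1 f \<Longrightarrow> smooth1 (\<lambda>x. c * f x)"
  by (rule sm_cmult[where D=D1]) (auto intro: D1_cmult)
lemma s1_mult: "smooth1 f \<Longrightarrow> smooth1 f' \<Longrightarrow> smooth1 (\<lambda>x. f x * f' x)"
  by (rule sm_mult[where D=D1]) (auto intro: D1_add D1_mult)
lemma s1_const: "smooth1 (\<lambda>x. c)"
  by (rule sm_const[where D=D1]) (auto intro: D1_const)
lemma sn_add: "sm Dn f \<Longrightarrow> sm Dn f' \<Longrightarrow> sm Dn (\<lambda>x. f x + f' x)"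
  by (rule sm_add[where D=Dn]) (auto intro: Dn_add)
lemma sn_cmult: "sm Dn f \<Longrightarrow> sm Dn (\<lambda>x. c * f x)"
  by (rule sm_cmult[where D=Dn]) (auto intro: Dn_cmult)
lemma sn_mult: "sm Dn f \<Longrightarrow> sm Dn f' \<Longrightarrow> sm Dn (\<lambda>x. f x * f' x)"
  by (rule sm_mult[where D=Dn]) (auto intro: Dn_add Dn_mult)
lemma sn_const: "sm Dn (\<lambda>x. c)"
  by (rule sm_const[where D=Dn]) (auto intro: Dn_const)

lemma sn_sum: "finite A \<Longrightarrow> (\<And>a. a \<in> A \<Longrightarrow> sm Dn (f a)) \<Longrightarrow> sm Dn (\<lambda>x. \<Sum>a\<in>A. f a x)"
proof (induct A rule: finite_induct)
  case empty then show ?case using sn_const[of 0] by simp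
next
  case (insert a A) then show ?case by (simp add: sn_add)
qed

lemma sn_prod: "finite A \<Longrightarrow> (\<And>a. a \<in> A \<Longrightarrow> sm Dn (f a)) \<Longrightarrow> sm Dn (\<lambda>x. \<Prod>a\<in>A. f a x)"
proof (induct A rule: finite_induct)
  case empty then show ?case using sn_const[of 1] by simp
next
  case (insert a A) then show ?case by (simp add: sn_mult)
qed

lemma s1_affine:
  assumes "smooth1 f"
  shows "smooth1 (\<lambda>t. f (a * t + c))"
proof -
  obtain F where F: "f \<in> F" "\<forall>g\<in>F. continuous_on UNIV g \<and> (\<forall>i. \<exists>h\<in>F. D1 i g h)"
    using assms unfolding sm_def by blast
  let ?H = "{(\<lambda>t. b * g (a * t + c)) | b g. g \<in> F}"
  show ?thesis unfolding sm_def
  proof (intro exI[of _ ?H] conjI ballI allI)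
    show "(\<lambda>t. f (a * t + c)) \<in> ?H" using F by (intro CollectI exI[of _ 1] exI[of _ f]) auto
  next
    fix u assume "u \<in> ?H"
    then obtain b g where u: "u = (\<lambda>t. b * g (a * t + c))" "g \<in> F" by blast
    have "continuous_on UNIV g" using u F by auto
    moreover have "continuous_on UNIV (\<lambda>t. a * t + c)" by (intro continuous_intros)
    ultimately have "continuous_on UNIV (\<lambda>t. g (a * t + c))"
      using continuous_on_compose2[of UNIV g UNIV "\<lambda>t. a * t + c"] by auto
    then show "continuous_on UNIV u" unfolding u by (simp add: continuous_on_mult continuous_on_const)
  next
    fix u i assume "u \<in> ?H"
    then obtain b g where u: "u = (\<lambda>t. b * g (a * t + c))" "g \<in> F" by blast
    obtain h where h: "h \<in> F" "D1 () g h" using u F by blast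
    have "D1 i u (\<lambda>t. (b * a) * h (a * t + c))"
      unfolding D1_def u
    proof
      fix x
      have "(g has_real_derivative h (a * x + c)) (at (a * x + c))" using h unfolding D1_def by blast
      then show "((\<lambda>t. b * g (a * t + c)) has_real_derivative b * a * h (a * x + c)) (at x)"
      proof -
        have "((\<lambda>t. g (a * t + c)) has_real_derivative h (a * x + c) * a) (at x)"
          by (rule DERIV_chain2[of g]) (use \<open>(g has_real_derivative _) _\<close> in \<open>auto intro!: derivative_eq_intros\<close>)
        from DERIV_cmult[OF this, of b] show ?thesis by (simp add: mult.assoc mult.commute mult.left_commute)
      qed
    qed
    then show "\<exists>h\<in>?H. D1 i u h" using h by blast
  qed
qed

lemma sn_lift:
  assumes "smooth1 f"
  shows "sm Dn (\<lambda>x::real^'n::finite. f (x $ i))"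
proof -
  obtain F where F: "f \<in> F" "\<forall>g\<in>F. continuous_on UNIV g \<and> (\<forall>i. \<exists>h\<in>F. D1 i g h)"
    using assms unfolding sm_def by blast
  let ?H = "insert (\<lambda>x. 0) {(\<lambda>x::real^'n. g (x $ i)) | g. g \<in> F}"
  show ?thesis unfolding sm_def
  proof (intro exI[of _ ?H] conjI ballI allI)
    show "(\<lambda>x. f (x $ i)) \<in> ?H" using F by blast
  next
    fix u assume "u \<in> ?H"
    then consider "u = (\<lambda>x. 0)" | g where "u = (\<lambda>x. g (x $ i))" "g \<in> F" by blast
    then show "continuous_on UNIV u"
    proof cases
      case 2
      have "continuous_on UNIV g" using 2 F by auto
      moreover have "continuous_on UNIV (\<lambda>x::real^'n. x $ i)" by (intro continuous_intros)
      ultimately show ?thesis unfolding 2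
        using continuous_on_compose2[of UNIV g UNIV "\<lambda>x::real^'n. x $ i"] by auto
    qed auto
  next
    fix u j assume "u \<in> ?H"
    then consider "u = (\<lambda>x. 0)" | g where "u = (\<lambda>x. g (x $ i))" "g \<in> F" by blast
    then show "\<exists>h\<in>?H. Dn j u h"
    proof cases
      case 1
      then show ?thesis using Dn_const[of j 0] by blast
    next
      case 2
      obtain h where h: "h \<in> F" "D1 () g h" using 2 F by blast
      show ?thesis
      proof (cases "j = i")
        case True
        have "Dn j u (\<lambda>x. h (x $ i))" unfolding Dn_def 2
        proof
          fix x :: "real^'n"
          have "(g has_real_derivative h (x $ i + 0)) (at (x $ i + 0))" using h unfolding D1_def by blast
          then have "((\<lambda>t. g (x $ i + t)) has_real_derivative h (x $ i)) (at 0)"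
            using DERIV_chain2[where f=g and g="\<lambda>t. x $ i + t", OF _ DERIV_add[OF DERIV_const DERIV_ident]]
            by auto
          then show "((\<lambda>t. g ((x + t *\<^sub>R axis j 1) $ i)) has_real_derivative h (x $ i)) (at 0)"
            using True by (simp add: axis_def)
        qed
        then show ?thesis using h by blast
      next
        case False
        have "Dn j u (\<lambda>x. 0)" unfolding Dn_def 2
          using False by (simp add: axis_def)
        then show ?thesis by blast
      qed
    qed
  qed
qed


definition fP :: "real poly \<Rightarrow> real \<Rightarrow> real" where
  "fP P t = (if t > 0 then poly P (inverse t) * exp (- inverse t) else 0)"

lemma poly_div_exp_lim: "((\<lambda>u. poly P u / exp u) \<longlongrightarrow> (0::real)) at_top"
proof -
  have eq: "(\<lambda>u. poly P u / exp u) = (\<lambda>u. \<Sum>i\<le>degree P. coeff P i * (u ^ i / exp u))"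
    by (rule ext) (simp add: poly_altdef sum_divide_distrib)
  have "((\<lambda>u. \<Sum>i\<le>degree P. coeff P i * (u ^ i / exp u)) \<longlongrightarrow> (\<Sum>i\<le>degree P. coeff P i * 0)) at_top"
    by (intro tendsto_intros tendsto_power_div_exp_0)
  then show ?thesis unfolding eq by simp
qed

lemma fP_right: "((\<lambda>t. poly P (inverse t) * exp (- inverse t)) \<longlongrightarrow> (0::real)) (at_right 0)"
proof -
  have "((\<lambda>x. poly P (inverse x) / exp (inverse x)) \<longlongrightarrow> 0) (at_right 0)"
    using poly_div_exp_lim[of P] by (subst (asm) filterlim_at_top_to_right) simp
  moreover have "(\<lambda>x. poly P (inverse x) / exp (inverse x)) = (\<lambda>t. poly P (inverse t) * exp (- inverse t))"
    by (rule ext) (simp add: exp_minus divide_inverse)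
  ultimately show ?thesis by simp
qed

definition Qd :: "real poly \<Rightarrow> real poly" where
  "Qd P = [:0, 0, 1:] * (P - pderiv P)"

lemma fP_deriv: "(fP P has_real_derivative fP (Qd P) x) (at x)"
proof -
  consider "x > 0" | "x < 0" | "x = 0" by linarith
  then show ?thesis
  proof cases
    case 1
    have x0: "x \<noteq> 0" using 1 by simp
    have i: "((\<lambda>t. inverse t) has_real_derivative -(inverse x ^ 2)) (at x)"
      using DERIV_inverse[OF x0] by (simp add: power2_eq_square)
    have p: "((\<lambda>t. poly P (inverse t)) has_real_derivative poly (pderiv P) (inverse x) * (-(inverse x ^ 2))) (at x)"
      by (rule DERIV_chain2[OF poly_DERIV i])
    have mi: "((\<lambda>t. - inverse t) has_real_derivative (inverse x ^ 2)) (at x)"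
      using DERIV_minus[OF i] by simp
    have ex: "((\<lambda>t. exp (- inverse t)) has_real_derivative exp (- inverse x) * (inverse x ^ 2)) (at x)"
      by (rule DERIV_chain2[OF DERIV_exp mi])
    have d: "((\<lambda>t. poly P (inverse t) * exp (- inverse t)) has_real_derivative
          poly (pderiv P) (inverse x) * (-(inverse x ^ 2)) * exp (- inverse x) + exp (- inverse x) * (inverse x ^ 2) * poly P (inverse x)) (at x)"
      by (rule DERIV_mult[OF p ex])
    have q: "poly (Qd P) u = u^2 * (poly P u - poly (pderiv P) u)" for u
      by (simp add: Qd_def power2_eq_square)
    have e: "poly (pderiv P) (inverse x) * (-(inverse x ^ 2)) * exp (- inverse x) + exp (- inverse x) * (inverse x ^ 2) * poly P (inverse x)
        = fP (Qd P) x"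
      unfolding fP_def q using 1 by (simp add: algebra_simps)
    have f: "\<And>t. t \<in> {0<..} \<Longrightarrow> poly P (inverse t) * exp (- inverse t) = fP P t"
      by (simp add: fP_def)
    show ?thesis
      using d[unfolded e]
      by (rule has_field_derivative_transform_within_open[where S="{0<..}"]) (use 1 f in auto)
  next
    case 2
    have "fP (Qd P) x = 0" using 2 by (simp add: fP_def)
    then have "((\<lambda>t. 0) has_real_derivative fP (Qd P) x) (at x)" by simp
    then show ?thesis
      by (rule has_field_derivative_transform_within_open[where S="{..<0}"]) (use 2 in \<open>auto simp: fP_def\<close>)
  next
    case 3
    have "((\<lambda>y. (fP P y - fP P 0) / (y - 0)) \<longlongrightarrow> 0) (at 0)"
    proof (rule filterlim_split_at)
      have "eventually (\<lambda>y. 0 = (fP P y - fP P 0) / (y - 0)) (at_left (0::real))"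
        by (rule eventually_mono[OF eventually_at_left_real[of "-1"]]) (auto simp: fP_def)
      then show "((\<lambda>y. (fP P y - fP P 0) / (y - 0)) \<longlongrightarrow> 0) (at_left 0)"
        by (rule Lim_transform_eventually[OF tendsto_const])
    next
      have "eventually (\<lambda>y. poly ([:0, 1:] * P) (inverse y) * exp (- inverse y) = (fP P y - fP P 0) / (y - 0)) (at_right (0::real))"
        by (rule eventually_mono[OF eventually_at_right_real[of _ 1]]) (auto simp: fP_def divide_inverse)
      then show "((\<lambda>y. (fP P y - fP P 0) / (y - 0)) \<longlongrightarrow> 0) (at_right 0)"
        by (rule Lim_transform_eventually[OF fP_right])
    qed
    then show ?thesis using 3 by (simp add: has_field_derivative_iff fP_def)
  qed
qed

definition psi :: "real \<Rightarrow> real" where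
  "psi t = (if t > 0 then exp (- 1 / t) else 0)"

lemma smooth1_psi: "smooth1 psi"
proof -
  have "psi = fP 1" by (rule ext) (simp add: psi_def fP_def divide_inverse)
  moreover have "smooth1 (fP 1)"
    unfolding sm_def
  proof (intro exI[of _ "range fP"] conjI ballI allI)
    fix g assume "g \<in> range fP"
    then obtain P where g: "g = fP P" by blast
    show "continuous_on UNIV g" unfolding g
      by (intro continuous_at_imp_continuous_on ballI DERIV_isCont[OF fP_deriv])
    fix i :: unit
    show "\<exists>h\<in>range fP. D1 i g h" unfolding g D1_def using fP_deriv by blast
  qed auto
  ultimately show ?thesis by simp
qed

lemma psi_nonneg: "psi t \<ge> 0" and psi_pos: "t > 0 \<Longrightarrow> psi t > 0" and psi_zero: "t \<le> 0 \<Longrightarrow> psi t = 0"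
  by (auto simp: psi_def)


lemma sm_cont: "sm D f \<Longrightarrow> continuous_on UNIV f"
  by (auto simp: sm_def)

lemma integrable_cs:
  fixes f :: "'a::euclidean_space \<Rightarrow> real"
  assumes "continuous_on UNIV f" "compact K" "\<And>x. x \<notin> K \<Longrightarrow> f x = 0"
  shows "integrable lborel f"
proof -
  have "f = (\<lambda>x. indicator K x *\<^sub>R f x)" using assms(3) by (auto simp: indicator_def fun_eq_iff)
  moreover have "integrable lborel (\<lambda>x. indicator K x *\<^sub>R f x)"
    by (rule borel_integrable_compact[OF assms(2) continuous_on_subset[OF assms(1)]]) auto
  ultimately show ?thesis by simp
qed

definition good :: "(real \<Rightarrow> real) \<Rightarrow> bool" where
  "good f \<longleftrightarrow> smooth1 f \<and> (\<forall>t. t \<notin> {0..3/4} \<longrightarrow> f t = 0)"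

lemma good_cont: "good f \<Longrightarrow> continuous_on UNIV f"
  unfolding good_def using sm_cont by blast

lemma good_int: "good f \<Longrightarrow> integrable lborel (\<lambda>t. t ^ j * f t)"
proof -
  assume g: "good f"
  have c: "continuous_on UNIV (\<lambda>t. t ^ j * f t)"
    by (rule continuous_on_mult[OF continuous_on_power[OF continuous_on_id] good_cont[OF g]])
  show ?thesis
    by (rule integrable_cs[OF c, of "{0..3/4}"]) (use g in \<open>auto simp: good_def\<close>)
qed

definition mom :: "nat \<Rightarrow> (real \<Rightarrow> real) \<Rightarrow> real" where
  "mom j f = (\<integral>t. t ^ j * f t \<partial>lborel)"

definition V :: "nat \<Rightarrow> (real \<Rightarrow> real) \<Rightarrow> real \<Rightarrow> real" where
  "V k f = (\<lambda>t. f t - 2 ^ k * (2 * f (2 * t)))"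

lemma good_V: "good f \<Longrightarrow> good (V k f)"
proof -
  assume g: "good f"
  have "V k f = (\<lambda>t. f t + (- (2 ^ k * 2)) * f (2 * t + 0))" by (auto simp: V_def)
  moreover have "smooth1 (\<lambda>t. f t + (- (2 ^ k * 2)) * f (2 * t + 0))"
    using g unfolding good_def by (intro s1_add s1_cmult s1_affine) auto
  moreover have "\<forall>t. t \<notin> {0..3/4} \<longrightarrow> V k f t = 0"
    using g unfolding good_def V_def by auto
  ultimately show ?thesis unfolding good_def by simp
qed

lemma mom_V:
  assumes "good f"
  shows "mom j (V k f) = (1 - 2 ^ k / 2 ^ j) * mom j f"
proof -
  have i1: "integrable lborel (\<lambda>t. t ^ j * f t)" using good_int[OF assms] .
  have c: "continuous_on UNIV f" using assms sm_cont unfolding good_def by blast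
  have i2: "integrable lborel (\<lambda>t. t ^ j * f (2 * t))"
  proof (rule integrable_cs[of _ "{0..3/4}"])
    show "continuous_on UNIV (\<lambda>t. t ^ j * f (2 * t))"
      by (intro continuous_intros continuous_on_compose2[OF c]) auto
    show "\<And>x. x \<notin> {0..3 / 4} \<Longrightarrow> x ^ j * f (2 * x) = 0"
      using assms unfolding good_def by auto
  qed auto
  have s: "(\<integral>t. t ^ j * f t \<partial>lborel) = \<bar>2\<bar> *\<^sub>R (\<integral>x. (0 + 2 * x) ^ j * f (0 + 2 * x) \<partial>lborel)"
    by (rule lborel_integral_real_affine) simp
  have "(\<integral>x. (0 + 2 * x) ^ j * f (0 + 2 * x) \<partial>lborel) = (\<integral>x. 2 ^ j * (x ^ j * f (2 * x)) \<partial>lborel)"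
    by (simp add: power_mult_distrib mult.assoc)
  also have "\<dots> = 2 ^ j * (\<integral>x. x ^ j * f (2 * x) \<partial>lborel)" by simp
  finally have s2: "(\<integral>x. x ^ j * f (2 * x) \<partial>lborel) = mom j f / 2 ^ (Suc j)"
    using s unfolding mom_def by simp
  have "mom j (V k f) = (\<integral>t. t ^ j * f t - 2 ^ k * 2 * (t ^ j * f (2 * t)) \<partial>lborel)"
    unfolding mom_def V_def by (simp add: algebra_simps)
  also have "\<dots> = mom j f - 2 ^ k * 2 * (\<integral>t. t ^ j * f (2 * t) \<partial>lborel)"
    using i1 i2 unfolding mom_def by simp
  also have "\<dots> = (1 - 2 ^ k / 2 ^ j) * mom j f"
    unfolding s2 by (simp add: field_simps)
  finally show ?thesis .
qed

definition W :: "nat list \<Rightarrow> (real \<Rightarrow> real) \<Rightarrow> real \<Rightarrow> real" where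
  "W ks f = foldr V ks f"

lemma good_W: "good f \<Longrightarrow> good (W ks f)"
  unfolding W_def by (induct ks) (auto intro: good_V)

lemma mom_W: "good f \<Longrightarrow> mom j (W ks f) = prod_list (map (\<lambda>k. 1 - 2 ^ k / 2 ^ j) ks) * mom j f"
proof (induct ks)
  case Nil then show ?case by (simp add: W_def)
next
  case (Cons k ks)
  have "good (W ks f)" using good_W Cons by blast
  then show ?case using Cons by (simp add: W_def mom_V)
qed

definition g0 :: "real \<Rightarrow> real" where
  "g0 t = psi (t - 1/4) * psi (3/4 - t)"

lemma good_g0: "good g0"
proof -
  have "g0 = (\<lambda>t. psi (1 * t + (-1/4)) * psi ((-1) * t + 3/4))"
    by (rule ext) (simp add: g0_def)
  moreover have "smooth1 (\<lambda>t. psi (1 * t + (-1/4)) * psi ((-1) * t + 3/4))"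
    by (intro s1_mult s1_affine smooth1_psi)
  moreover have "\<forall>t. t \<notin> {0..3/4} \<longrightarrow> g0 t = 0"
    by (auto simp: g0_def psi_zero)
  ultimately show ?thesis unfolding good_def by simp
qed

lemma integral_pos_cont:
  fixes h :: "real \<Rightarrow> real"
  assumes c: "continuous_on UNIV h" and nn: "\<And>t. h t \<ge> 0" and i: "integrable lborel h" and p: "h a > 0"
  shows "(\<integral>t. h t \<partial>lborel) > 0"
proof -
  have "isCont h a" using c by (simp add: continuous_on_eq_continuous_at)
  then obtain d where d: "d > 0" "\<And>t. dist t a < d \<Longrightarrow> dist (h t) (h a) < h a / 2"
    using p unfolding continuous_at_eps_delta by (metis half_gt_zero)
  have le: "h a / 2 * indicator {a - d/2 .. a + d/2} t \<le> h t" for t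
  proof (cases "t \<in> {a - d/2 .. a + d/2}")
    case True
    then have "dist t a < d" using d by (auto simp: dist_real_def)
    then have "dist (h t) (h a) < h a / 2" using d by blast
    then have "h a - h t < h a / 2" unfolding dist_real_def by linarith
    then show ?thesis using True by simp
  qed (use nn in auto)
  have ii: "integrable lborel (\<lambda>t. h a / 2 * indicator {a - d/2 .. a + d/2} t)"
    using d by (intro integrable_mult_right integrable_real_indicator) (auto simp: emeasure_lborel_Icc_eq)
  have m: "measure lborel {a - d/2 .. a + d/2} = d" using d by (simp add: measure_lborel_Icc)
  have "(\<integral>t. h a / 2 * indicator {a - d/2 .. a + d/2} t \<partial>lborel) = h a / 2 * (\<integral>t. indicator {a - d/2 .. a + d/2} t \<partial>lborel)"
    by (rule integral_mult_right_zero)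
  also have "(\<integral>t. indicator {a - d/2 .. a + d/2} t \<partial>lborel) = measure lborel {a - d/2 .. a + d/2}"
    by (simp add: Bochner_Integration.integral_indicator)
  finally have "(\<integral>t. h a / 2 * indicator {a - d/2 .. a + d/2} t \<partial>lborel) = h a / 2 * d" using m by simp
  moreover have "(\<integral>t. h a / 2 * indicator {a - d/2 .. a + d/2} t \<partial>lborel) \<le> (\<integral>t. h t \<partial>lborel)"
    by (rule integral_mono[OF ii i le])
  moreover have "h a / 2 * d > 0" using p d by simp
  ultimately show ?thesis by linarith
qed

lemma mom_g0_pos: "mom l g0 > 0"
  unfolding mom_def
proof (rule integral_pos_cont[where a="1/2"])
  show "continuous_on UNIV (\<lambda>t. t ^ l * g0 t)"
    by (rule continuous_on_mult[OF continuous_on_power[OF continuous_on_id] good_cont[OF good_g0]])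
  show "integrable lborel (\<lambda>t. t ^ l * g0 t)" by (rule good_int[OF good_g0])
  show "0 \<le> t ^ l * g0 t" for t
  proof (cases "t > 1/4")
    case True then show ?thesis by (auto simp: g0_def intro!: mult_nonneg_nonneg psi_nonneg)
  next
    case False then show ?thesis by (simp add: g0_def psi_zero)
  qed
  show "0 < (1 / 2) ^ l * g0 (1 / 2)"
    by (auto simp: g0_def intro!: mult_pos_pos psi_pos)
qed

definition ks :: "nat \<Rightarrow> nat \<Rightarrow> nat list" where
  "ks N l = filter (\<lambda>k. k \<noteq> l) [0..<Suc N]"

definition cst :: "nat \<Rightarrow> nat \<Rightarrow> real" where
  "cst N l = prod_list (map (\<lambda>k. 1 - 2 ^ k / 2 ^ l) (ks N l)) * mom l g0"

definition psiN :: "nat \<Rightarrow> nat \<Rightarrow> real \<Rightarrow> real" where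
  "psiN N l = (\<lambda>t. (1 / cst N l) * W (ks N l) g0 t)"

lemma cst_nz: "cst N l \<noteq> 0"
proof -
  have "prod_list (map (\<lambda>k. 1 - 2 ^ k / 2 ^ l) (ks N l)) \<noteq> (0::real)"
  proof
    assume "prod_list (map (\<lambda>k. 1 - 2 ^ k / 2 ^ l) (ks N l)) = (0::real)"
    then obtain k where k: "k \<in> set (ks N l)" "1 - 2 ^ k / 2 ^ l = (0::real)"
      by (auto simp: prod_list_zero_iff)
    then have "(2::real) ^ k = 2 ^ l" by (simp add: field_simps)
    then have "k = l" by simp
    then show False using k by (auto simp: ks_def simp del: upt_Suc)
  qed
  then show ?thesis unfolding cst_def using mom_g0_pos[of l] by simp
qed

lemma good_psiN: "good (psiN N l)"
proof -
  have g: "good (W (ks N l) g0)" by (rule good_W[OF good_g0])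
  then show ?thesis using s1_cmult[of "W (ks N l) g0" "1 / cst N l"] unfolding good_def psiN_def by auto
qed

lemma mom_psiN:
  assumes "j \<le> N"
  shows "mom j (psiN N l) = (if j = l then 1 else 0)"
proof -
  have g: "good (W (ks N l) g0)" by (rule good_W[OF good_g0])
  have "mom j (psiN N l) = (1 / cst N l) * mom j (W (ks N l) g0)"
    unfolding mom_def psiN_def by (simp add: mult.left_commute)
  also have "\<dots> = (1 / cst N l) * (prod_list (map (\<lambda>k. 1 - 2 ^ k / 2 ^ j) (ks N l)) * mom j g0)"
    using mom_W[OF good_g0] by simp
  also have "\<dots> = (if j = l then 1 else 0)"
  proof (cases "j = l")
    case True then show ?thesis using cst_nz[of N l] by (simp add: cst_def)
  next
    case False
    then have "j \<in> set (ks N l)" using assms by (auto simp: ks_def)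
    then have "prod_list (map (\<lambda>k. 1 - 2 ^ k / 2 ^ j) (ks N l)) = (0::real)"
      by (auto simp: prod_list_zero_iff)
    then show ?thesis using False by simp
  qed
  finally show ?thesis .
qed

lemma good_bounded: "good f \<Longrightarrow> \<exists>C\<ge>0. \<forall>t. \<bar>f t\<bar> \<le> C"
proof -
  assume g: "good f"
  have "continuous_on {0..3/4} f" using g unfolding good_def by (auto intro: continuous_on_subset sm_cont)
  then have "compact (f ` {0..3/4})" by (rule compact_continuous_image) simp
  then obtain C where C: "C > 0" "\<And>x. x \<in> f ` {0..3/4} \<Longrightarrow> norm x \<le> C"
    using compact_imp_bounded bounded_pos by metis
  have "\<bar>f t\<bar> \<le> C" for t
    using C g unfolding good_def by (cases "t \<in> {0..3/4}") auto
  then show ?thesis using C by (intro exI[of _ C]) auto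
qed


lemma mom_shift:
  assumes g: "good \<phi>" and m: "\<And>j. j \<le> N \<Longrightarrow> mom j \<phi> = (if j = b then 1 else 0)"
    and a: "a \<le> N" and r: "r > 0"
  shows "(\<integral>t. t ^ a * (1 / r ^ Suc b * \<phi> ((t - c) / r)) \<partial>lborel) = of_nat (a choose b) * c ^ (a - b)"
proof -
  let ?G = "\<lambda>t. t ^ a * (1 / r ^ Suc b * \<phi> ((t - c) / r))"
  have s: "(\<integral>t. ?G t \<partial>lborel) = \<bar>r\<bar> *\<^sub>R (\<integral>x. ?G (c + r * x) \<partial>lborel)"
    by (rule lborel_integral_real_affine) (use r in simp)
  have e: "?G (c + r * x) = (\<Sum>k\<le>a. (of_nat (a choose k) * r ^ k * c ^ (a - k) / r ^ Suc b) * (x ^ k * \<phi> x))" for x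
  proof -
    have "(c + r * x - c) / r = x" using r by simp
    then have "?G (c + r * x) = (r * x + c) ^ a * (1 / r ^ Suc b * \<phi> x)" by (simp add: add.commute)
    also have "\<dots> = (\<Sum>k\<le>a. of_nat (a choose k) * (r * x) ^ k * c ^ (a - k)) * (1 / r ^ Suc b * \<phi> x)"
      by (simp add: binomial_ring)
    also have "\<dots> = (\<Sum>k\<le>a. (of_nat (a choose k) * r ^ k * c ^ (a - k) / r ^ Suc b) * (x ^ k * \<phi> x))"
      by (subst sum_distrib_right) (rule sum.cong, simp_all add: power_mult_distrib field_simps)
    finally show ?thesis .
  qed
  have "(\<integral>x. ?G (c + r * x) \<partial>lborel) = (\<Sum>k\<le>a. (of_nat (a choose k) * r ^ k * c ^ (a - k) / r ^ Suc b) * mom k \<phi>)"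
    unfolding e mom_def
    by (subst Bochner_Integration.integral_sum) (auto intro!: integrable_mult_right good_int[OF g])
  also have "\<dots> = (\<Sum>k\<le>a. (if k = b then of_nat (a choose k) * r ^ k * c ^ (a - k) / r ^ Suc b else 0))"
    using a by (intro sum.cong refl) (auto simp: m)
  also have "\<dots> = (if b \<le> a then of_nat (a choose b) * r ^ b * c ^ (a - b) / r ^ Suc b else 0)"
    by (simp add: sum.delta)
  finally have "(\<integral>x. ?G (c + r * x) \<partial>lborel) = (if b \<le> a then of_nat (a choose b) * r ^ b * c ^ (a - b) / r ^ Suc b else 0)" .
  then show ?thesis unfolding s using r by (auto simp: field_simps)
qed

lemma binom_inv:
  "(\<Sum>b\<le>a. of_nat (a choose b) * c ^ (a - b) * (of_nat (b choose g) * (- c) ^ (b - g))) = (if a = g then 1 else (0::real))"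
proof (cases "g \<le> a")
  case False
  have "(\<Sum>b\<le>a. of_nat (a choose b) * c ^ (a - b) * (of_nat (b choose g) * (- c) ^ (b - g))) = (0::real)"
  proof (rule sum.neutral, rule ballI)
    fix b assume "b \<in> {..a}"
    then have "b < g" using False by simp
    then have "b choose g = 0" by (simp add: binomial_eq_0)
    then show "of_nat (a choose b) * c ^ (a - b) * (of_nat (b choose g) * (- c) ^ (b - g)) = (0::real)" by simp
  qed
  then show ?thesis using False by simp
next
  case True
  define T where "T b = of_nat (a choose b) * c ^ (a - b) * (of_nat (b choose g) * (- c) ^ (b - g))" for b
  have "(\<Sum>b\<le>a. T b) = (\<Sum>b\<in>{g..a}. T b)"
  proof -
    have z: "\<forall>b\<in>{..a} - {g..a}. T b = 0"
    proof
      fix b assume "b \<in> {..a} - {g..a}"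
      then have "b < g" by auto
      then have "b choose g = 0" by (simp add: binomial_eq_0)
      then show "T b = 0" by (simp add: T_def)
    qed
    show ?thesis by (rule sum.mono_neutral_right) (use z in auto)
  qed
  also have "\<dots> = (\<Sum>j\<in>{0..a-g}. T (j + g))"
    using sum.shift_bounds_cl_nat_ivl[of T 0 g "a - g"] True by simp
  also have "\<dots> = (\<Sum>j\<in>{0..a-g}. of_nat (a choose g) * (of_nat ((a - g) choose j) * (- c) ^ j * c ^ (a - g - j)))"
  proof (rule sum.cong[OF refl])
    fix j assume j: "j \<in> {0..a-g}"
    have "(a choose (j + g)) * ((j + g) choose g) = (a choose g) * ((a - g) choose (j + g - g))"
      by (rule choose_mult) (use j True in auto)
    then have "of_nat (a choose (j + g)) * of_nat ((j + g) choose g) = (of_nat (a choose g) * of_nat ((a - g) choose j) :: real)"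
      by (metis add_diff_cancel_right' of_nat_mult)
    moreover have "a - (j + g) = a - g - j" by simp
    ultimately show "T (j + g) = of_nat (a choose g) * (of_nat ((a - g) choose j) * (- c) ^ j * c ^ (a - g - j))"
      unfolding T_def by (simp add: algebra_simps)
  qed
  also have "\<dots> = of_nat (a choose g) * (\<Sum>j\<le>a-g. of_nat ((a - g) choose j) * (- c) ^ j * c ^ (a - g - j))"
    by (simp add: sum_distrib_left atLeast0AtMost)
  also have "\<dots> = of_nat (a choose g) * (- c + c) ^ (a - g)"
    by (subst binomial_ring) (rule refl)
  also have "\<dots> = (if a = g then 1 else 0)" using True by simp
  finally show ?thesis unfolding T_def .
qed


lemma lborel_prod_basis:
  fixes f :: "'a::euclidean_space \<Rightarrow> real \<Rightarrow> real"
  assumes int: "\<And>b. b \<in> Basis \<Longrightarrow> integrable lborel (f b)"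
  shows "(\<integral>x. (\<Prod>b\<in>Basis. f b (x \<bullet> b)) \<partial>(lborel::'a measure)) = (\<Prod>b\<in>Basis. integral\<^sup>L lborel (f b))"
proof -
  interpret product_sigma_finite "\<lambda>_::'a. lborel::real measure"
    by standard
  have [measurable]: "\<And>b. b \<in> Basis \<Longrightarrow> f b \<in> borel_measurable borel"
    using int by (simp add: borel_measurable_integrable)
  have m1: "(\<lambda>g. \<Sum>b\<in>Basis. g b *\<^sub>R b) \<in> measurable (\<Pi>\<^sub>M b\<in>Basis. lborel) (borel :: 'a measure)"
    by measurable
  have m2: "(\<lambda>x::'a. \<Prod>b\<in>Basis. f b (x \<bullet> b)) \<in> borel_measurable borel"
    by measurable
  have "(\<integral>x. (\<Prod>b\<in>Basis. f b (x \<bullet> b)) \<partial>(lborel::'a measure))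
      = (\<integral>g. (\<Prod>b\<in>Basis. f b ((\<Sum>b'\<in>Basis. g b' *\<^sub>R b') \<bullet> b)) \<partial>(\<Pi>\<^sub>M b\<in>Basis. lborel))"
    by (subst lborel_eq) (rule integral_distr[OF m1 m2])
  also have "\<dots> = (\<integral>g. (\<Prod>b\<in>Basis. f b (g b)) \<partial>(\<Pi>\<^sub>M b\<in>Basis. lborel))"
  proof (rule Bochner_Integration.integral_cong[OF refl])
    fix g :: "'a \<Rightarrow> real"
    show "(\<Prod>b\<in>Basis. f b ((\<Sum>b'\<in>Basis. g b' *\<^sub>R b') \<bullet> b)) = (\<Prod>b\<in>Basis. f b (g b))"
      by (intro prod.cong refl) (simp add: inner_sum_left inner_Basis if_distrib sum.delta cong: if_cong)
  qed
  also have "\<dots> = (\<Prod>b\<in>Basis. integral\<^sup>L lborel (f b))"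
    by (rule product_integral_prod) (auto intro: int)
  finally show ?thesis .
qed

lemma lborel_prod_cart:
  fixes f :: "'n::finite \<Rightarrow> real \<Rightarrow> real"
  assumes int: "\<And>i. integrable lborel (f i)"
  shows "(\<integral>x. (\<Prod>i\<in>UNIV. f i (x $ i)) \<partial>(lborel::(real^'n) measure)) = (\<Prod>i\<in>UNIV. integral\<^sup>L lborel (f i))"
proof -
  define F where "F b = f (axis_index b)" for b :: "real^'n"
  have B: "(Basis :: (real^'n) set) = (\<lambda>i. axis i 1) ` UNIV"
    by (auto simp: Basis_vec_def)
  have inj: "inj (\<lambda>i::'n. axis i (1::real))"
    by (auto simp: inj_def axis_eq_axis)
  have P: "(\<Prod>b\<in>Basis. G b) = (\<Prod>i\<in>UNIV. G (axis i 1))" for G :: "real^'n \<Rightarrow> real"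
    unfolding B by (subst prod.reindex[OF inj]) simp
  have "(\<integral>x. (\<Prod>b\<in>Basis. F b (x \<bullet> b)) \<partial>(lborel::(real^'n) measure)) = (\<Prod>b\<in>Basis. integral\<^sup>L lborel (F b))"
    by (rule lborel_prod_basis) (simp add: F_def int)
  then show ?thesis unfolding P F_def by (simp add: cart_eq_inner_axis)
qed


definition Bset :: "nat \<Rightarrow> ('n::finite \<Rightarrow> nat) set" where
  "Bset N = {\<alpha>. mi_abs \<alpha> \<le> N}"

definition Mb :: "nat \<Rightarrow> real \<Rightarrow> real^'n::finite \<Rightarrow> ('n \<Rightarrow> nat) \<Rightarrow> real^'n \<Rightarrow> real" where
  "Mb N r y \<beta> x = (\<Prod>i\<in>UNIV. 1 / r ^ Suc (\<beta> i) * psiN N (\<beta> i) ((x $ i - y $ i) / r))"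

definition Fc :: "real^'n::finite \<Rightarrow> ('n \<Rightarrow> nat) \<Rightarrow> ('n \<Rightarrow> nat) \<Rightarrow> real" where
  "Fc y \<beta> \<gamma> = (\<Prod>i\<in>UNIV. of_nat (\<beta> i choose \<gamma> i) * (- (y $ i)) ^ (\<beta> i - \<gamma> i))"

definition Ec :: "real^'n::finite \<Rightarrow> ('n \<Rightarrow> nat) \<Rightarrow> ('n \<Rightarrow> nat) \<Rightarrow> real" where
  "Ec y \<alpha> \<beta> = (\<Prod>i\<in>UNIV. of_nat (\<alpha> i choose \<beta> i) * (y $ i) ^ (\<alpha> i - \<beta> i))"

lemma Bset_le: "\<alpha> \<in> Bset N \<Longrightarrow> \<alpha> i \<le> N"
  unfolding Bset_def mi_abs_def
  by (metis (no_types, lifting) finite mem_Collect_eq member_le_sum order_trans UNIV_I zero_le)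

lemma finite_Bset: "finite (Bset N :: ('n::finite \<Rightarrow> nat) set)"
proof (rule finite_subset)
  show "Bset N \<subseteq> Pi\<^sub>E UNIV (\<lambda>_. {..N})" using Bset_le by (auto simp: PiE_UNIV_domain)
  show "finite (Pi\<^sub>E (UNIV::'n set) (\<lambda>_. {..N}))" by (rule finite_PiE) auto
qed

lemma mb_factor_eq: "(\<lambda>x::real^'n::finite. 1 / r ^ Suc b * psiN N b ((x $ i - c) / r))
    = (\<lambda>x. (\<lambda>t. 1 / r ^ Suc b * psiN N b ((1 / r) * t + (- c / r))) (x $ i))"
  by (rule ext) (simp add: diff_divide_distrib)

lemma smooth_Mb: "sm Dn (Mb N r y (\<beta>::'n::finite \<Rightarrow> nat))"
  unfolding Mb_def
proof (rule sn_prod)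
  fix i :: 'n
  have "smooth1 (\<lambda>t. 1 / r ^ Suc (\<beta> i) * psiN N (\<beta> i) ((1 / r) * t + (- (y $ i) / r)))"
    using good_psiN unfolding good_def by (intro s1_cmult s1_affine) auto
  then show "sm Dn (\<lambda>x. 1 / r ^ Suc (\<beta> i) * psiN N (\<beta> i) ((x $ i - y $ i) / r))"
    unfolding mb_factor_eq by (rule sn_lift)
qed simp

lemma Mb_zero:
  assumes r: "r > 0" and x: "x \<notin> cball y (3/4 * (real CARD('n) * r))"
  shows "Mb N r y \<beta> (x::real^'n::finite) = 0"
proof (rule ccontr)
  assume nz: "Mb N r y \<beta> x \<noteq> 0"
  have "(x $ i - y $ i) / r \<in> {0..3/4}" for i
  proof (rule ccontr)
    assume "(x $ i - y $ i) / r \<notin> {0..3/4}"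
    then have "psiN N (\<beta> i) ((x $ i - y $ i) / r) = 0" using good_psiN unfolding good_def by blast
    then have "Mb N r y \<beta> x = 0" unfolding Mb_def by (intro prod_zero bexI[of _ i]) auto
    then show False using nz by simp
  qed
  then have b: "\<bar>(x - y) $ i\<bar> \<le> 3/4 * r" for i
    using r by (auto simp: field_simps)
  have "norm (x - y) \<le> (\<Sum>i\<in>UNIV. \<bar>(x - y) $ i\<bar>)" by (rule norm_le_l1_cart)
  also have "\<dots> \<le> (\<Sum>i\<in>(UNIV::'n set). 3/4 * r)" by (rule sum_mono) (rule b)
  also have "\<dots> = 3/4 * (real CARD('n) * r)" by simp
  finally have "dist y x \<le> 3/4 * (real CARD('n) * r)" by (simp add: dist_norm norm_minus_commute)
  then show False using x by simp
qed

lemma cont_mono_pow: "continuous_on UNIV (\<lambda>x. mono_pow x \<alpha>)"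
  unfolding mono_pow_def by (intro continuous_intros)

lemma int_factor:
  assumes r: "r > 0"
  shows "integrable lborel (\<lambda>t. t ^ a * (1 / r ^ Suc b * psiN N b ((t - c) / r)))"
proof (rule integrable_cs[of _ "{c..c + r}"])
  have "continuous_on UNIV (\<lambda>t. psiN N b ((1 / r) * t + (- c / r)))"
    by (rule continuous_on_compose2[OF good_cont[OF good_psiN]]) (use r in \<open>auto intro!: continuous_intros\<close>)
  moreover have "(\<lambda>t. psiN N b ((1 / r) * t + (- c / r))) = (\<lambda>t. psiN N b ((t - c) / r))"
    by (rule ext) (simp add: diff_divide_distrib)
  ultimately have "continuous_on UNIV (\<lambda>t. psiN N b ((t - c) / r))" by metis
  then show "continuous_on UNIV (\<lambda>t. t ^ a * (1 / r ^ Suc b * psiN N b ((t - c) / r)))"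
    by (intro continuous_intros)
  show "t ^ a * (1 / r ^ Suc b * psiN N b ((t - c) / r)) = 0" if "t \<notin> {c..c + r}" for t
  proof -
    have "(t - c) / r \<notin> {0..3/4}" using that r by (auto simp: field_simps)
    then show ?thesis using good_psiN unfolding good_def by simp
  qed
qed auto

lemma int_Mb:
  assumes r: "r > 0" and a: "\<alpha> \<in> Bset N"
  shows "(\<integral>x. mono_pow x \<alpha> * Mb N r y \<beta> x \<partial>lborel) = Ec y \<alpha> \<beta>"
proof -
  have "(\<lambda>x. mono_pow x \<alpha> * Mb N r y \<beta> x) =
      (\<lambda>x. \<Prod>i\<in>UNIV. (\<lambda>i t. t ^ \<alpha> i * (1 / r ^ Suc (\<beta> i) * psiN N (\<beta> i) ((t - y $ i) / r))) i (x $ i))"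
    by (rule ext) (simp only: mono_pow_def Mb_def prod.distrib)
  then have "(\<integral>x. mono_pow x \<alpha> * Mb N r y \<beta> x \<partial>lborel) =
      (\<Prod>i\<in>UNIV. (\<integral>t. t ^ \<alpha> i * (1 / r ^ Suc (\<beta> i) * psiN N (\<beta> i) ((t - y $ i) / r)) \<partial>lborel))"
    using lborel_prod_cart[of "\<lambda>i t. t ^ \<alpha> i * (1 / r ^ Suc (\<beta> i) * psiN N (\<beta> i) ((t - y $ i) / r))"]
      int_factor[OF r] by simp
  also have "\<dots> = Ec y \<alpha> \<beta>"
    unfolding Ec_def
    by (intro prod.cong refl mom_shift[OF good_psiN mom_psiN Bset_le[OF a] r])
  finally show ?thesis .
qed


lemma EF_inv:
  assumes a: "\<alpha> \<in> Bset N" and g: "\<gamma> \<in> Bset N"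
  shows "(\<Sum>\<beta>\<in>Bset N. Ec y \<alpha> \<beta> * Fc y \<beta> \<gamma>) = (if \<alpha> = \<gamma> then 1 else 0)"
proof -
  let ?Box = "Pi\<^sub>E (UNIV::'a set) (\<lambda>i. {..\<alpha> i})"
  have sub: "?Box \<subseteq> Bset N"
  proof
    fix \<beta> assume "\<beta> \<in> ?Box"
    then have "\<beta> i \<le> \<alpha> i" for i by (auto simp: PiE_UNIV_domain)
    then have "mi_abs \<beta> \<le> mi_abs \<alpha>" unfolding mi_abs_def by (intro sum_mono) auto
    then show "\<beta> \<in> Bset N" using a by (simp add: Bset_def)
  qed
  have z: "\<forall>\<beta>\<in>Bset N - ?Box. Ec y \<alpha> \<beta> * Fc y \<beta> \<gamma> = 0"
  proof
    fix \<beta> assume "\<beta> \<in> Bset N - ?Box"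
    then obtain i where "\<not> \<beta> i \<le> \<alpha> i" by (auto simp: PiE_UNIV_domain)
    then have "\<alpha> i choose \<beta> i = 0" by (simp add: binomial_eq_0)
    then have "Ec y \<alpha> \<beta> = 0" unfolding Ec_def by (intro prod_zero bexI[of _ i]) auto
    then show "Ec y \<alpha> \<beta> * Fc y \<beta> \<gamma> = 0" by simp
  qed
  have "(\<Sum>\<beta>\<in>Bset N. Ec y \<alpha> \<beta> * Fc y \<beta> \<gamma>) = (\<Sum>\<beta>\<in>?Box. Ec y \<alpha> \<beta> * Fc y \<beta> \<gamma>)"
    by (rule sum.mono_neutral_right[OF finite_Bset sub z])
  also have "\<dots> = (\<Sum>\<beta>\<in>?Box. \<Prod>i\<in>UNIV. of_nat (\<alpha> i choose \<beta> i) * (y $ i) ^ (\<alpha> i - \<beta> i) *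
        (of_nat (\<beta> i choose \<gamma> i) * (- (y $ i)) ^ (\<beta> i - \<gamma> i)))"
    unfolding Ec_def Fc_def by (simp only: prod.distrib)
  also have "\<dots> = (\<Prod>i\<in>UNIV. \<Sum>b\<in>{..\<alpha> i}. of_nat (\<alpha> i choose b) * (y $ i) ^ (\<alpha> i - b) *
        (of_nat (b choose \<gamma> i) * (- (y $ i)) ^ (b - \<gamma> i)))"
    by (rule prod_sum_PiE[symmetric]) auto
  also have "\<dots> = (\<Prod>i\<in>UNIV. if \<alpha> i = \<gamma> i then 1 else 0)"
    by (intro prod.cong refl binom_inv)
  also have "\<dots> = (if \<alpha> = \<gamma> then 1 else 0)"
  proof (cases "\<alpha> = \<gamma>")
    case False
    then obtain i where i: "\<alpha> i \<noteq> \<gamma> i" by auto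
    have "(\<Prod>i\<in>UNIV. if \<alpha> i = \<gamma> i then 1 else 0) = (0::real)"
      by (rule prod_zero) (use i in auto)
    then show ?thesis using False by simp
  qed simp
  finally show ?thesis .
qed

lemma Fc_bound:
  assumes b: "\<beta> \<in> Bset N"
  shows "\<bar>Fc y \<beta> \<gamma>\<bar> \<le> (2 * (1 + norm y)) ^ N"
proof -
  let ?A = "2 * (1 + norm y)"
  have "\<bar>Fc y \<beta> \<gamma>\<bar> = (\<Prod>i\<in>UNIV. \<bar>of_nat (\<beta> i choose \<gamma> i) * (- (y $ i)) ^ (\<beta> i - \<gamma> i)\<bar>)"
    unfolding Fc_def by (simp add: abs_prod)
  also have "\<dots> \<le> (\<Prod>i\<in>UNIV. ?A ^ (\<beta> i))"
  proof (rule prod_mono, rule conjI)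
    fix i
    show "0 \<le> \<bar>of_nat (\<beta> i choose \<gamma> i) * (- (y $ i)) ^ (\<beta> i - \<gamma> i)\<bar>" by simp
    have c: "real (\<beta> i choose \<gamma> i) \<le> 2 ^ \<beta> i"
      using binomial_le_pow2[of "\<beta> i" "\<gamma> i"] by (metis of_nat_le_iff of_nat_numeral of_nat_power)
    have "\<bar>y $ i\<bar> \<le> 1 + norm y" using component_le_norm_cart[of y i] by simp
    then have "\<bar>y $ i\<bar> ^ (\<beta> i - \<gamma> i) \<le> (1 + norm y) ^ (\<beta> i - \<gamma> i)" by (intro power_mono) auto
    also have "\<dots> \<le> (1 + norm y) ^ \<beta> i" by (intro power_increasing) auto
    finally have p: "\<bar>y $ i\<bar> ^ (\<beta> i - \<gamma> i) \<le> (1 + norm y) ^ \<beta> i" .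
    have "\<bar>of_nat (\<beta> i choose \<gamma> i) * (- (y $ i)) ^ (\<beta> i - \<gamma> i)\<bar> = real (\<beta> i choose \<gamma> i) * \<bar>y $ i\<bar> ^ (\<beta> i - \<gamma> i)"
      by (simp add: abs_mult power_abs)
    also have "\<dots> \<le> 2 ^ \<beta> i * (1 + norm y) ^ \<beta> i"
      by (intro mult_mono c p) auto
    also have "\<dots> = ?A ^ \<beta> i" by (simp only: power_mult_distrib)
    finally show "\<bar>of_nat (\<beta> i choose \<gamma> i) * (- (y $ i)) ^ (\<beta> i - \<gamma> i)\<bar> \<le> ?A ^ \<beta> i" .
  qed
  also have "\<dots> = ?A ^ mi_abs \<beta>" unfolding mi_abs_def by (simp add: power_sum)
  also have "\<dots> \<le> ?A ^ N" using b by (intro power_increasing) (auto simp: Bset_def)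
  finally show ?thesis .
qed

lemma Mb_bound:
  assumes r: "0 < r" "r \<le> 1" and C0: "C0 \<ge> 0" "\<And>l t. l \<le> N \<Longrightarrow> \<bar>psiN N l t\<bar> \<le> C0"
    and b: "\<beta> \<in> Bset N"
  shows "\<bar>Mb N r y \<beta> (x::real^'n::finite)\<bar> \<le> C0 ^ CARD('n) / r ^ (CARD('n) + N)"
proof -
  have "\<bar>Mb N r y \<beta> x\<bar> = (\<Prod>i\<in>UNIV. 1 / r ^ Suc (\<beta> i) * \<bar>psiN N (\<beta> i) ((x $ i - y $ i) / r)\<bar>)"
    unfolding Mb_def using r by (simp add: abs_prod abs_mult)
  also have "\<dots> \<le> (\<Prod>i\<in>UNIV. 1 / r ^ Suc (\<beta> i) * C0)"
    by (intro prod_mono conjI mult_left_mono C0(2) Bset_le[OF b]) (use r in auto)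
  also have "\<dots> = C0 ^ CARD('n) / r ^ (CARD('n) + mi_abs \<beta>)"
  proof -
    have "(\<Prod>i\<in>UNIV. 1 / r ^ Suc (\<beta> i) * C0) = (\<Prod>i\<in>(UNIV::'n set). C0) / (\<Prod>i\<in>UNIV. r ^ Suc (\<beta> i))"
      by (simp add: prod.distrib prod_dividef)
    also have "(\<Prod>i\<in>(UNIV::'n set). r ^ Suc (\<beta> i)) = r ^ (\<Sum>i\<in>UNIV. Suc (\<beta> i))" by (simp add: power_sum)
    also have "(\<Sum>i\<in>(UNIV::'n set). Suc (\<beta> i)) = CARD('n) + mi_abs \<beta>"
    proof -
      have "(\<Sum>i\<in>(UNIV::'n set). Suc (\<beta> i)) = (\<Sum>i\<in>(UNIV::'n set). 1) + (\<Sum>i\<in>UNIV. \<beta> i)"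
        by (simp add: sum_Suc)
      then show ?thesis unfolding mi_abs_def by simp
    qed
    finally show ?thesis by simp
  qed
  also have "\<dots> \<le> C0 ^ CARD('n) / r ^ (CARD('n) + N)"
  proof (rule divide_left_mono)
    show "r ^ (CARD('n) + N) \<le> r ^ (CARD('n) + mi_abs \<beta>)"
      using b r by (intro power_decreasing) (auto simp: Bset_def)
  qed (use r C0 in auto)
  finally show ?thesis .
qed

lemma mv_bound:
  assumes "\<gamma> \<in> Bset N"
  shows "\<bar>m \<gamma>\<bar> \<le> mvec_norm N m"
proof -
  have "(m \<gamma>)^2 \<le> (\<Sum>\<alpha>\<in>Bset N. (m \<alpha>)^2)"
    by (rule member_le_sum[OF assms]) (auto intro: finite_Bset)
  then have "sqrt ((m \<gamma>)^2) \<le> sqrt (\<Sum>\<alpha>\<in>Bset N. (m \<alpha>)^2)" by (rule real_sqrt_le_mono)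
  then show ?thesis unfolding mvec_norm_def Bset_def by simp
qed

lemma psi_bounds: "\<exists>C0\<ge>1. \<forall>l t. l \<le> N \<longrightarrow> \<bar>psiN N l t\<bar> \<le> C0"
proof -
  have "\<forall>l. \<exists>C\<ge>0. \<forall>t. \<bar>psiN N l t\<bar> \<le> C" using good_bounded[OF good_psiN] by blast
  then obtain Cf where Cf: "\<And>l. Cf l \<ge> 0" "\<And>l t. \<bar>psiN N l t\<bar> \<le> Cf l" by metis
  have "\<bar>psiN N l t\<bar> \<le> 1 + (\<Sum>k\<le>N. Cf k)" if "l \<le> N" for l t
  proof -
    have "Cf l \<le> (\<Sum>k\<le>N. Cf k)" by (rule member_le_sum) (use that Cf in auto)
    then show ?thesis using Cf(2)[of l t] by simp
  qed
  moreover have "1 \<le> 1 + (\<Sum>k\<le>N. Cf k)" using Cf by (simp add: sum_nonneg)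
  ultimately show ?thesis by blast
qed


theorem mainTheorem5:
  fixes N :: nat
  shows "\<exists>p :: real poly. degree p = N \<and>
    (\<forall>(\<epsilon>::real) (y::real^'n::finite). 0 < \<epsilon> \<and> \<epsilon> \<le> 1 \<longrightarrow>
      (\<exists>\<Psi> :: (('n \<Rightarrow> nat) \<Rightarrow> real) \<Rightarrow> (real^'n \<Rightarrow> real).
         (\<forall>a b m m'. \<Psi> (\<lambda>\<alpha>. a * m \<alpha> + b * m' \<alpha>) = (\<lambda>x. a * \<Psi> m x + b * \<Psi> m' x)) \<and>
         (\<forall>m. \<Psi> m \<in> Cc_inf (ball y \<epsilon>)) \<and>
         (\<forall>m \<alpha>. mi_abs \<alpha> \<le> N \<longrightarrow> integral UNIV (\<lambda>x. mono_pow x \<alpha> * \<Psi> m x) = m \<alpha>) \<and>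
         (\<forall>m x. \<bar>\<Psi> m x\<bar> \<le> poly p (norm y) / \<epsilon> ^ (CARD('n) + N) * mvec_norm N m)))"
proof -
  define d where "d = CARD('n)"
  have d0: "d > 0" unfolding d_def by simp
  obtain C0 where C0: "C0 \<ge> 1" "\<And>l t. l \<le> N \<Longrightarrow> \<bar>psiN N l t\<bar> \<le> C0"
    using psi_bounds[of N] by blast
  define cB where "cB = real (card (Bset N :: ('n \<Rightarrow> nat) set))"
  have cB0: "cB > 0"
  proof -
    have "(\<lambda>_. 0) \<in> (Bset N :: ('n \<Rightarrow> nat) set)" by (simp add: Bset_def mi_abs_def)
    then have "card (Bset N :: ('n \<Rightarrow> nat) set) > 0" using finite_Bset card_gt_0_iff by blast
    then show ?thesis unfolding cB_def by simp
  qed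
  define K where "K = cB * cB * 2 ^ N * C0 ^ d * real d ^ (d + N)"
  have K0: "K > 0" unfolding K_def using cB0 C0 d0 by simp
  define p where "p = smult K ([:1, 1:] ^ N)"
  have degp: "degree p = N" using K0 by (simp add: p_def degree_linear_power)
  have polyp: "poly p t = K * (1 + t) ^ N" for t by (simp add: p_def poly_power add.commute)
  show ?thesis
  proof (intro exI[of _ p] conjI allI impI degp)
    fix \<epsilon> :: real and y :: "real^'n"
    assume e: "0 < \<epsilon> \<and> \<epsilon> \<le> 1"
    define r where "r = \<epsilon> / real d"
    have r0: "r > 0" "r \<le> 1" using e d0 by (auto simp: r_def field_simps)
    have dr: "real d * r = \<epsilon>" using d0 by (simp add: r_def)
    define B where "B = (Bset N :: ('n \<Rightarrow> nat) set)"
    have fB: "finite B" unfolding B_def by (rule finite_Bset)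
    define \<Psi> where "\<Psi> = (\<lambda>(m :: ('n \<Rightarrow> nat) \<Rightarrow> real) x. \<Sum>\<beta>\<in>B. (\<Sum>\<gamma>\<in>B. Fc y \<beta> \<gamma> * m \<gamma>) * Mb N r y \<beta> x)"
    have sm: "sm Dn (\<Psi> m)" for m
      unfolding \<Psi>_def by (intro sn_sum fB sn_cmult smooth_Mb)
    have zero: "\<Psi> m x = 0" if "x \<notin> cball y (3/4 * \<epsilon>)" for m x
    proof -
      have "Mb N r y \<beta> x = 0" for \<beta>
        by (rule Mb_zero[OF r0(1)]) (use that dr in \<open>simp add: d_def\<close>)
      then show ?thesis unfolding \<Psi>_def by simp
    qed
    have Mzero: "Mb N r y \<beta> x = 0" if "x \<notin> cball y (3/4 * \<epsilon>)" for \<beta> x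
      by (rule Mb_zero[OF r0(1)]) (use that dr in \<open>simp add: d_def\<close>)
    show "\<exists>\<Psi> :: (('n \<Rightarrow> nat) \<Rightarrow> real) \<Rightarrow> (real^'n \<Rightarrow> real).
         (\<forall>a b m m'. \<Psi> (\<lambda>\<alpha>. a * m \<alpha> + b * m' \<alpha>) = (\<lambda>x. a * \<Psi> m x + b * \<Psi> m' x)) \<and>
         (\<forall>m. \<Psi> m \<in> Cc_inf (ball y \<epsilon>)) \<and>
         (\<forall>m \<alpha>. mi_abs \<alpha> \<le> N \<longrightarrow> integral UNIV (\<lambda>x. mono_pow x \<alpha> * \<Psi> m x) = m \<alpha>) \<and>
         (\<forall>m x. \<bar>\<Psi> m x\<bar> \<le> poly p (norm y) / \<epsilon> ^ (CARD('n) + N) * mvec_norm N m)"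
    proof (intro exI[of _ \<Psi>] conjI allI impI)
      fix a b :: real and m m' :: "('n \<Rightarrow> nat) \<Rightarrow> real"
      show "\<Psi> (\<lambda>\<alpha>. a * m \<alpha> + b * m' \<alpha>) = (\<lambda>x. a * \<Psi> m x + b * \<Psi> m' x)"
        unfolding \<Psi>_def
        by (rule ext) (simp add: distrib_left distrib_right sum.distrib sum_distrib_left sum_distrib_right mult_ac)
    next
      fix m
      show "\<Psi> m \<in> Cc_inf (ball y \<epsilon>)"
        unfolding Cc_inf_def
      proof (intro CollectI conjI exI[of _ "cball y (3/4 * \<epsilon>)"])
        show "smooth_fun (\<Psi> m)" using sm smooth_fun_sm by blast
        show "compact (cball y (3/4 * \<epsilon>))" by simp
        show "cball y (3/4 * \<epsilon>) \<subseteq> ball y \<epsilon>" using e by (auto simp: subset_iff)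
        show "\<forall>x. x \<notin> cball y (3/4 * \<epsilon>) \<longrightarrow> \<Psi> m x = 0" using zero by blast
      qed
    next
      fix m and \<alpha> :: "'n \<Rightarrow> nat"
      assume a: "mi_abs \<alpha> \<le> N"
      then have aB: "\<alpha> \<in> Bset N" by (simp add: Bset_def)
      have intM: "integrable lborel (\<lambda>x. mono_pow x \<alpha> * Mb N r y \<beta> x)" for \<beta>
        by (rule integrable_cs[of _ "cball y (3/4 * \<epsilon>)"])
           (auto intro!: continuous_on_mult cont_mono_pow sm_cont[OF smooth_Mb] simp: Mzero)
      have "integrable lborel (\<lambda>x. mono_pow x \<alpha> * \<Psi> m x)"
        by (rule integrable_cs[of _ "cball y (3/4 * \<epsilon>)"])
           (auto intro!: continuous_on_mult cont_mono_pow sm_cont[OF sm] simp: zero)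
      then have "integral UNIV (\<lambda>x. mono_pow x \<alpha> * \<Psi> m x) = (\<integral>x. mono_pow x \<alpha> * \<Psi> m x \<partial>lborel)"
        by (rule integral_lborel)
      also have "\<dots> = (\<integral>x. (\<Sum>\<beta>\<in>B. (\<Sum>\<gamma>\<in>B. Fc y \<beta> \<gamma> * m \<gamma>) * (mono_pow x \<alpha> * Mb N r y \<beta> x)) \<partial>lborel)"
        unfolding \<Psi>_def by (simp add: sum_distrib_left mult_ac)
      also have "\<dots> = (\<Sum>\<beta>\<in>B. (\<Sum>\<gamma>\<in>B. Fc y \<beta> \<gamma> * m \<gamma>) * (\<integral>x. mono_pow x \<alpha> * Mb N r y \<beta> x \<partial>lborel))"
        by (subst Bochner_Integration.integral_sum) (auto intro!: integrable_mult_right intM)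
      also have "\<dots> = (\<Sum>\<beta>\<in>B. (\<Sum>\<gamma>\<in>B. Fc y \<beta> \<gamma> * m \<gamma>) * Ec y \<alpha> \<beta>)"
        using int_Mb[OF r0(1) aB] by simp
      also have "\<dots> = (\<Sum>\<beta>\<in>B. \<Sum>\<gamma>\<in>B. m \<gamma> * (Ec y \<alpha> \<beta> * Fc y \<beta> \<gamma>))"
        by (intro sum.cong refl) (simp add: sum_distrib_left sum_distrib_right mult_ac)
      also have "\<dots> = (\<Sum>\<gamma>\<in>B. \<Sum>\<beta>\<in>B. m \<gamma> * (Ec y \<alpha> \<beta> * Fc y \<beta> \<gamma>))"
        by (rule sum.swap)
      also have "\<dots> = (\<Sum>\<gamma>\<in>B. m \<gamma> * (\<Sum>\<beta>\<in>B. Ec y \<alpha> \<beta> * Fc y \<beta> \<gamma>))"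
        by (simp add: sum_distrib_left)
      also have "\<dots> = (\<Sum>\<gamma>\<in>B. m \<gamma> * (if \<alpha> = \<gamma> then 1 else 0))"
        by (intro sum.cong refl) (simp add: B_def EF_inv[OF aB])
      also have "\<dots> = m \<alpha>" using aB fB by (simp add: B_def if_distrib sum.delta cong: if_cong)
      finally show "integral UNIV (\<lambda>x. mono_pow x \<alpha> * \<Psi> m x) = m \<alpha>" .
    next
      fix m :: "('n \<Rightarrow> nat) \<Rightarrow> real" and x :: "real^'n"
      define A where "A = (2 * (1 + norm y)) ^ N"
      define mv where "mv = mvec_norm N m"
      have mb: "\<bar>Mb N r y \<beta> x\<bar> \<le> C0 ^ d / r ^ (d + N)" if "\<beta> \<in> B" for \<beta>
        unfolding d_def by (rule Mb_bound[OF r0 _ C0(2)]) (use C0 that in \<open>auto simp: B_def\<close>)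
      have mu: "\<bar>\<Sum>\<gamma>\<in>B. Fc y \<beta> \<gamma> * m \<gamma>\<bar> \<le> cB * (A * mv)" if "\<beta> \<in> B" for \<beta>
      proof -
        have "\<bar>\<Sum>\<gamma>\<in>B. Fc y \<beta> \<gamma> * m \<gamma>\<bar> \<le> (\<Sum>\<gamma>\<in>B. \<bar>Fc y \<beta> \<gamma>\<bar> * \<bar>m \<gamma>\<bar>)"
          by (rule order_trans[OF sum_abs]) (simp add: abs_mult)
        also have "\<dots> \<le> (\<Sum>\<gamma>\<in>B. A * mv)"
        proof (rule sum_mono)
          fix \<gamma> assume g: "\<gamma> \<in> B"
          show "\<bar>Fc y \<beta> \<gamma>\<bar> * \<bar>m \<gamma>\<bar> \<le> A * mv"
            unfolding A_def mv_def
            by (intro mult_mono Fc_bound mv_bound) (use that g in \<open>auto simp: B_def\<close>)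
        qed
        also have "\<dots> = cB * (A * mv)" by (simp add: cB_def B_def)
        finally show ?thesis .
      qed
      have "\<bar>\<Psi> m x\<bar> \<le> (\<Sum>\<beta>\<in>B. \<bar>\<Sum>\<gamma>\<in>B. Fc y \<beta> \<gamma> * m \<gamma>\<bar> * \<bar>Mb N r y \<beta> x\<bar>)"
        unfolding \<Psi>_def by (rule order_trans[OF sum_abs]) (simp add: abs_mult)
      also have "\<dots> \<le> (\<Sum>\<beta>\<in>B. cB * (A * mv) * (C0 ^ d / r ^ (d + N)))"
        by (intro sum_mono mult_mono mu mb) (use cB0 in \<open>auto simp: A_def mv_def mvec_norm_def intro!: mult_nonneg_nonneg sum_nonneg\<close>)
      also have "\<dots> = cB * (cB * (A * mv) * (C0 ^ d / r ^ (d + N)))" by (simp add: cB_def B_def)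
      also have "\<dots> = poly p (norm y) / \<epsilon> ^ (CARD('n) + N) * mvec_norm N m"
      proof -
        have r': "C0 ^ d / r ^ (d + N) = C0 ^ d * real d ^ (d + N) / \<epsilon> ^ (d + N)"
          using e d0 by (simp add: r_def power_divide)
        have A': "A = 2 ^ N * (1 + norm y) ^ N" unfolding A_def by (simp only: power_mult_distrib)
        show ?thesis
          unfolding r' A' polyp K_def mv_def d_def[symmetric] using e d0
          by (simp add: field_simps)
      qed
      finally show "\<bar>\<Psi> m x\<bar> \<le> poly p (norm y) / \<epsilon> ^ (CARD('n) + N) * mvec_norm N m" .
    qed
  qed
qed

end
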